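(* Let $(X,d)$ be a locally compact metric space with a flow $\pi$ and let $M$ be a compact subset of $X$. Then $$\Omega(M)=\bigcap_{\varepsilon>0,\,t>0}P_t(M,\varepsilon).$$
   Context: A flow is a continuous map $\pi: X\times\mathbb{R}\to X$ with $\pi(x,0)=x$ and $\pi(\pi(x,t),s)=\pi(x,t+s)$; write $x\cdot t=\pi(x,t)$. For $x,y\in X$ and $\varepsilon,t>0$, an $(\varepsilon,t)$-chain from $x$ to $y$ is a pair of finite sequences $x=x_1,x_2,\dots,x_n,x_{n+1}=y$ in $X$ and $t_1,\dots,t_n$ in $\mathbb{R}^+$ with $t_i\ge t$ and $d(x_i\cdot t_i,x_{i+1})\le\varepsilon$ for all $i=1,\dots,n$. For $x\in X$, $\Omega(x)$ is the set of $y\in X$ such that for every $\varepsilon>0$ and $t>0$ there is an $(\varepsilon,t)$-chain from $x$ to $y$; for $M\subseteq X$, $\Omega(M)=\bigcup_{x\in M}\Omega(x)$. For $\varepsilon,t>0$, $P_t(M,\varepsilon)$ is the set of $y\in X$ such that there is an $(\varepsilon,t)$-chain from $x$ to $y$ for some $x\in M$. *)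

theory Defs
  imports "HOL-Analysis.Analysis"
begin

text \<open>A flow on a metric space type 'a, written curried: fl x t = x . t.\<close>
definition is_flow :: "('a::metric_space \<Rightarrow> real \<Rightarrow> 'a) \<Rightarrow> bool" where
  "is_flow fl \<longleftrightarrow> continuous_on UNIV (\<lambda>p. fl (fst p) (snd p))
     \<and> (\<forall>x. fl x 0 = x) \<and> (\<forall>x t s. fl (fl x t) s = fl x (t + s))"

definition chain :: "('a::metric_space \<Rightarrow> real \<Rightarrow> 'a) \<Rightarrow> real \<Rightarrow> real \<Rightarrow> 'a \<Rightarrow> 'a \<Rightarrow> bool" where
  "chain fl eps t x y \<longleftrightarrow>
     (\<exists>n::nat. n \<ge> 1 \<and> (\<exists>xs::nat \<Rightarrow> 'a. \<exists>ts::nat \<Rightarrow> real.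
        xs 0 = x \<and> xs n = y \<and>
        (\<forall>i<n. 0 < ts i \<and> t \<le> ts i \<and> dist (fl (xs i) (ts i)) (xs (Suc i)) \<le> eps)))"

definition Omega_pt :: "('a::metric_space \<Rightarrow> real \<Rightarrow> 'a) \<Rightarrow> 'a \<Rightarrow> 'a set" where
  "Omega_pt fl x = {y. \<forall>eps>0. \<forall>t>0. chain fl eps t x y}"

definition Omega :: "('a::metric_space \<Rightarrow> real \<Rightarrow> 'a) \<Rightarrow> 'a set \<Rightarrow> 'a set" where
  "Omega fl M = (\<Union>x\<in>M. Omega_pt fl x)"

definition Preach :: "('a::metric_space \<Rightarrow> real \<Rightarrow> 'a) \<Rightarrow> real \<Rightarrow> 'a set \<Rightarrow> real \<Rightarrow> 'a set" where
  "Preach fl t M eps = {y. \<exists>x\<in>M. chain fl eps t x y}"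

end

theory Submission
  imports Defs
begin

lemma chain_prepend:
  assumes fl: "is_flow fl" and t: "t > 0" and d: "dist (fl x t) (fl z t) \<le> eps"
    and e: "e' \<le> eps" and tt: "2*t \<le> t'" and c: "chain fl e' t' z y"
  shows "chain fl eps t x y"
proof -
  from c obtain n xs ts where n: "n \<ge> 1" and x0: "xs 0 = z" and xn: "xs n = y"
    and st: "\<forall>i<n. 0 < ts i \<and> t' \<le> ts i \<and> dist (fl (xs i) (ts i)) (xs (Suc i)) \<le> e'"
    unfolding chain_def by blast
  have flow: "\<And>x a b. fl (fl x a) b = fl x (a + b)" using fl unfolding is_flow_def by blast
  define xs' where "xs' = (\<lambda>k. case k of 0 \<Rightarrow> x | Suc i \<Rightarrow> (if i = 0 then fl (xs 0) t else xs i))"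
  define ts' where "ts' = (\<lambda>k. case k of 0 \<Rightarrow> t | Suc i \<Rightarrow> (if i = 0 then ts 0 - t else ts i))"
  have "\<forall>i<Suc n. 0 < ts' i \<and> t \<le> ts' i \<and> dist (fl (xs' i) (ts' i)) (xs' (Suc i)) \<le> eps"
  proof (intro allI impI)
    fix i assume i: "i < Suc n"
    show "0 < ts' i \<and> t \<le> ts' i \<and> dist (fl (xs' i) (ts' i)) (xs' (Suc i)) \<le> eps"
    proof (cases i)
      case 0 then show ?thesis using t d x0 by (simp add: xs'_def ts'_def)
    next
      case (Suc j)
      show ?thesis
      proof (cases "j = 0")
        case True
        have "0 < ts 0 \<and> t' \<le> ts 0 \<and> dist (fl (xs 0) (ts 0)) (xs (Suc 0)) \<le> e'" using st n by auto
        then show ?thesis using Suc True t tt e flow[of "xs 0" t "ts 0 - t"]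
          by (simp add: xs'_def ts'_def)
      next
        case False
        have "j < n" using i Suc by simp
        then have "0 < ts j \<and> t' \<le> ts j \<and> dist (fl (xs j) (ts j)) (xs (Suc j)) \<le> e'" using st by auto
        then show ?thesis using Suc False t tt e by (simp add: xs'_def ts'_def)
      qed
    qed
  qed
  moreover have "xs' 0 = x" by (simp add: xs'_def)
  moreover have "xs' (Suc n) = y" using n xn by (simp add: xs'_def)
  ultimately show ?thesis unfolding chain_def by (intro exI[of _ "Suc n"]) auto
qed

theorem lemma3p3:
  fixes fl :: "'a::metric_space \<Rightarrow> real \<Rightarrow> 'a" and M :: "'a set"
  assumes "locally compact (UNIV :: 'a set)"
    and "is_flow fl"
    and "compact M"
  shows "Omega fl M = (\<Inter>eps\<in>{0<..}. \<Inter>t\<in>{0<..}. Preach fl t M eps)"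
proof
  show "Omega fl M \<subseteq> (\<Inter>eps\<in>{0<..}. \<Inter>t\<in>{0<..}. Preach fl t M eps)"
    unfolding Omega_def Omega_pt_def Preach_def by auto
next
  show "(\<Inter>eps\<in>{0<..}. \<Inter>t\<in>{0<..}. Preach fl t M eps) \<subseteq> Omega fl M"
  proof
    fix y assume y: "y \<in> (\<Inter>eps\<in>{0<..}. \<Inter>t\<in>{0<..}. Preach fl t M eps)"
    have "\<forall>n. \<exists>x. x \<in> M \<and> chain fl (1 / real (Suc n)) (real (Suc n)) x y"
    proof
      fix n
      have "y \<in> Preach fl (real (Suc n)) M (1 / real (Suc n))" using y by auto
      then show "\<exists>x. x \<in> M \<and> chain fl (1 / real (Suc n)) (real (Suc n)) x y"
        unfolding Preach_def by auto
    qed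
    then obtain f where f: "\<And>n. f n \<in> M" "\<And>n. chain fl (1 / real (Suc n)) (real (Suc n)) (f n) y"
      by metis
    obtain x r where xM: "x \<in> M" and r: "strict_mono r" and lim: "(f \<circ> r) \<longlonglongrightarrow> x"
      using compact_imp_seq_compact[OF assms(3)] f(1) unfolding seq_compact_def by metis
    have cont: "\<And>t. continuous_on UNIV (\<lambda>x. fl x t)"
    proof -
      fix t
      have "continuous_on UNIV (\<lambda>p. fl (fst p) (snd p))" using assms(2) unfolding is_flow_def by blast
      then have "continuous_on UNIV ((\<lambda>p. fl (fst p) (snd p)) \<circ> (\<lambda>x. (x, t)))"
        by (intro continuous_on_compose continuous_intros) (auto intro: continuous_on_subset)
      then show "continuous_on UNIV (\<lambda>x. fl x t)" by (simp add: o_def)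
    qed
    have "chain fl eps t x y" if eps: "eps > 0" and t: "t > 0" for eps t
    proof -
      have "((\<lambda>x. fl x t) \<circ> (f \<circ> r)) \<longlonglongrightarrow> fl x t"
        using continuous_on_tendsto_compose[OF cont lim] by (simp add: o_def)
      then have "\<forall>\<^sub>F n in sequentially. dist (fl (f (r n)) t) (fl x t) < eps"
        using eps by (simp add: tendsto_iff o_def)
      then obtain N0 where N0: "\<And>n. n \<ge> N0 \<Longrightarrow> dist (fl (f (r n)) t) (fl x t) < eps"
        unfolding eventually_sequentially by blast
      obtain N1 :: nat where N1: "real N1 > 2*t + 1/eps" using reals_Archimedean2 by blast
      define n where "n = max N0 N1"
      have rn: "r n \<ge> n" using seq_suble[OF r] by blast
      have "real N1 \<le> real (r n)" using rn n_def by simp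
      then have big: "real (Suc (r n)) > 2*t + 1/eps" using N1 by simp
      have "1 / real (Suc (r n)) \<le> eps"
      proof -
        have "1/eps < real (Suc (r n))" using big t by simp
        then show ?thesis using eps by (simp add: field_simps)
      qed
      moreover have "dist (fl x t) (fl (f (r n)) t) \<le> eps"
        using N0[of n] n_def by (simp add: dist_commute)
      moreover have "2*t \<le> real (Suc (r n))" using big eps by (smt (verit) divide_pos_pos)
      ultimately show ?thesis
        using chain_prepend[OF assms(2) t _ _ _ f(2)[of "r n"]] by blast
    qed
    then show "y \<in> Omega fl M" unfolding Omega_def Omega_pt_def using xM by auto
  qed
qed

end
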